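(* Let $P=\{x\in\mathbb{R}^n: Ax\le b,\ 0\le x_i\le u_i \text{ for } i\in I\}$ be a rational polyhedron with $I=\{1,\dots,l\}$ and positive integers $u_i$, and let $\mathcal{B}=(B^1,\dots,B^l)$ be a binarization scheme, $B^i\in\Gamma^{q_i}_{u_i}$, with $z_1\in\mathbb{R}^{q_1}$ the new variables associated with $x_1$. Then for any split set $S=\{(x,z)\in\mathbb{R}^{n+q}:\pi_0<\pi^Tz_1<\pi_0+1\}$ with $\pi\in\mathbb{Z}^{q_1}$ and $\pi_0\in\mathbb{Z}$, there exists a split set $S'=\{x\in\mathbb{R}^n:\sigma_0<\sigma^Tx<\sigma_0+1\}$ with $\sigma\in\mathbb{Z}^n$, $\sigma_j=0$ for $j\notin I$, and $\sigma_0\in\mathbb{Z}$, such that \[\operatorname{proj}_x(P_{\mathcal{B}}\setminus S)\supseteq P\setminus S'.\]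
   Context: For positive integers $q,u$, $\Gamma^q_u$ is the set of rational polytopes $B\subseteq\{(x,z)\in\mathbb{R}\times[0,1]^q:0\le x\le u\}$ with $\operatorname{proj}_x(B\cap(\mathbb{R}\times\{0,1\}^q))=\{0,1,\dots,u\}$. For a binarization scheme $\mathcal{B}=(B^1,\dots,B^l)$, $q=\sum_iq_i$ and $P_{\mathcal{B}}=\{(x,z)\in\mathbb{R}^n\times\mathbb{R}^q: x\in P,\ (x_i,z_i)\in B^i \text{ for } i\in I\}$, where $z=(z_1,\dots,z_l)$ with $z_i\in\mathbb{R}^{q_i}$. $\operatorname{proj}_x$ is orthogonal projection onto the $x$-coordinates. *)

theory Defs
  imports Complex_Main
begin

text \<open>Vectors of R^d are encoded as functions nat => real vanishing from index d on
  (coordinates are indexed 0,...,d-1).\<close>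
definition Rn :: "nat \<Rightarrow> (nat \<Rightarrow> real) set" where
  "Rn d = {x. \<forall>j\<ge>d. x j = 0}"

definition rat_polytope_xz :: "nat \<Rightarrow> (real \<times> (nat \<Rightarrow> real)) set \<Rightarrow> bool" where
  "rat_polytope_xz q B \<longleftrightarrow>
     (\<exists>(m::nat) (a::nat \<Rightarrow> real) (c::nat \<Rightarrow> nat \<Rightarrow> real) (d::nat \<Rightarrow> real).
        (\<forall>k<m. a k \<in> \<rat> \<and> d k \<in> \<rat> \<and> (\<forall>j<q. c k j \<in> \<rat>)) \<and>
        B = {(x, z). z \<in> Rn q \<and> (\<forall>k<m. a k * x + (\<Sum>j<q. c k j * z j) \<le> d k)}) \<and>
     (\<exists>M. \<forall>(x, z)\<in>B. \<bar>x\<bar> \<le> M \<and> (\<forall>j<q. \<bar>z j\<bar> \<le> M))"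

definition Gamma :: "nat \<Rightarrow> nat \<Rightarrow> (real \<times> (nat \<Rightarrow> real)) set set" where
  "Gamma q u = {B. rat_polytope_xz q B \<and>
     B \<subseteq> {(x, z). z \<in> Rn q \<and> (\<forall>j<q. 0 \<le> z j \<and> z j \<le> 1) \<and> 0 \<le> x \<and> x \<le> real u} \<and>
     fst ` (B \<inter> {(x, z). z \<in> Rn q \<and> (\<forall>j<q. z j = 0 \<or> z j = 1)}) = real ` {0..u}}"

definition box_polyhedron ::
  "nat \<Rightarrow> nat \<Rightarrow> (nat \<Rightarrow> nat \<Rightarrow> real) \<Rightarrow> (nat \<Rightarrow> real) \<Rightarrow> nat \<Rightarrow> (nat \<Rightarrow> nat) \<Rightarrow> (nat \<Rightarrow> real) set" where
  "box_polyhedron n m A b l u = {x \<in> Rn n. (\<forall>k<m. (\<Sum>j<n. A k j * x j) \<le> b k) \<and>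
      (\<forall>i<l. 0 \<le> x i \<and> x i \<le> real (u i))}"

text \<open>The extended formulation P_B. The new variables z = (z_1,...,z_l) are encoded
  as z :: nat => nat => real, z i being the block z_{i+1} in R^{q_{i+1}}.\<close>
definition binarized ::
  "nat \<Rightarrow> (nat \<Rightarrow> real) set \<Rightarrow> nat \<Rightarrow> (nat \<Rightarrow> (real \<times> (nat \<Rightarrow> real)) set)
     \<Rightarrow> ((nat \<Rightarrow> real) \<times> (nat \<Rightarrow> nat \<Rightarrow> real)) set" where
  "binarized n P l B = {(x, z). x \<in> P \<and> (\<forall>i<l. (x i, z i) \<in> B i) \<and> (\<forall>i\<ge>l. z i = (\<lambda>_. 0))}"

end

theory Submission
  imports Defs
begin

lemma conv:
  assumes "rat_polytope_xz q B" "(a, z1) \<in> B" "(b, z2) \<in> B" "0 \<le> th" "th \<le> 1"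
  shows "(th*a + (1-th)*b, (\<lambda>j. th * z1 j + (1-th) * z2 j)) \<in> B"
proof -
  obtain m :: nat and aa c d where Bd: "B = {(x, z). z \<in> Rn q \<and> (\<forall>k<m. aa k * x + (\<Sum>j<q. c k j * z j) \<le> d k)}"
    using assms(1) unfolding rat_polytope_xz_def by auto
  have h1: "z1 \<in> Rn q" "\<forall>k<m. aa k * a + (\<Sum>j<q. c k j * z1 j) \<le> d k" using assms(2) Bd by auto
  have h2: "z2 \<in> Rn q" "\<forall>k<m. aa k * b + (\<Sum>j<q. c k j * z2 j) \<le> d k" using assms(3) Bd by auto
  have "(\<lambda>j. th * z1 j + (1-th) * z2 j) \<in> Rn q" using h1(1) h2(1) by (simp add: Rn_def)
  moreover have "\<forall>k<m. aa k * (th*a + (1-th)*b) + (\<Sum>j<q. c k j * (th * z1 j + (1-th) * z2 j)) \<le> d k"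
  proof (intro allI impI)
    fix k assume k: "k < m"
    have s1: "(\<Sum>j<q. c k j * (th * z1 j + (1-th) * z2 j)) = (\<Sum>j<q. th * (c k j * z1 j) + (1-th) * (c k j * z2 j))"
      by (rule sum.cong) (auto simp: algebra_simps)
    have s2: "(\<Sum>j<q. th * (c k j * z1 j) + (1-th) * (c k j * z2 j)) = th * (\<Sum>j<q. c k j * z1 j) + (1-th) * (\<Sum>j<q. c k j * z2 j)"
      by (simp add: sum.distrib sum_distrib_left)
    have e: "aa k * (th*a + (1-th)*b) + (\<Sum>j<q. c k j * (th * z1 j + (1-th) * z2 j))
      = th * (aa k * a + (\<Sum>j<q. c k j * z1 j)) + (1-th) * (aa k * b + (\<Sum>j<q. c k j * z2 j))"
      unfolding s1 s2 by (simp add: algebra_simps)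
    show "aa k * (th*a + (1-th)*b) + (\<Sum>j<q. c k j * (th * z1 j + (1-th) * z2 j)) \<le> d k"
      unfolding e by (rule convex_bound_le) (use h1 h2 k assms in auto)
  qed
  ultimately show ?thesis using Bd by auto
qed

lemma interp:
  assumes "rat_polytope_xz q B" "(a, z1) \<in> B" "(b, z2) \<in> B" "a \<le> t" "t \<le> b"
  shows "\<exists>th. 0 \<le> th \<and> th \<le> 1 \<and> (t, (\<lambda>j. th * z1 j + (1-th) * z2 j)) \<in> B"
proof (cases "a = b")
  case True
  then have "t = a" using assms by auto
  then show ?thesis using assms(2) by (intro exI[of _ 1]) auto
next
  case False
  define th where "th = (b - t) / (b - a)"
  have ab: "a < b" using False assms by auto
  have "0 \<le> th" "th \<le> 1" using ab assms by (auto simp: th_def field_simps)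
  moreover have "th*a + (1-th)*b = t"
  proof -
    have ne: "b - a \<noteq> 0" using ab by simp
    have "th*(b-a) = b-t" using ne by (simp add: th_def)
    moreover have "th*a + (1-th)*b = b - th*(b-a)" by (simp add: algebra_simps)
    ultimately show ?thesis by simp
  qed
  ultimately show ?thesis using conv[OF assms(1-3), of th] by auto
qed

lemma gam:
  assumes "B \<in> Gamma q u" "k \<le> u"
  shows "\<exists>z. (real k, z) \<in> B \<and> (\<forall>j<q. z j = 0 \<or> z j = 1)"
proof -
  have "real k \<in> fst ` (B \<inter> {(x, z). z \<in> Rn q \<and> (\<forall>j<q. z j = 0 \<or> z j = 1)})"
    using assms unfolding Gamma_def by auto
  then show ?thesis by force
qed

lemma intsplit:
  fixes r :: real and p :: int
  assumes "r \<in> \<int>"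
  shows "r \<le> p \<or> r \<ge> p + 1"
proof -
  obtain k where "r = of_int k" using assms Ints_cases by blast
  then show ?thesis by (cases "k \<le> p") auto
qed

lemma convex_bound_ge':
  fixes x y a th :: real
  assumes "a \<le> x" "a \<le> y" "0 \<le> th" "th \<le> 1"
  shows "a \<le> th * x + (1-th) * y"
proof -
  have "th * a \<le> th * x" "(1-th) * a \<le> (1-th) * y" using assms by (auto intro: mult_left_mono)
  then have "th * a + (1-th)*a \<le> th * x + (1-th) * y" by linarith
  then show ?thesis by (simp add: algebra_simps)
qed

lemma wsum:
  fixes th :: real and p :: "nat \<Rightarrow> int"
  shows "(\<Sum>j<Q. real_of_int (p j) * (th * z1 j + (1-th) * z2 j)) =
     th * (\<Sum>j<Q. real_of_int (p j) * z1 j) + (1-th) * (\<Sum>j<Q. real_of_int (p j) * z2 j)"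
proof -
  have "(\<Sum>j<Q. real_of_int (p j) * (th * z1 j + (1-th) * z2 j)) = (\<Sum>j<Q. th * (real_of_int (p j) * z1 j) + (1-th) * (real_of_int (p j) * z2 j))"
    by (rule sum.cong) (auto simp: algebra_simps)
  also have "\<dots> = th * (\<Sum>j<Q. real_of_int (p j) * z1 j) + (1-th) * (\<Sum>j<Q. real_of_int (p j) * z2 j)"
    by (simp add: sum.distrib sum_distrib_left)
  finally show ?thesis .
qed

theorem proposition5:
  fixes n m l :: nat
    and A :: "nat \<Rightarrow> nat \<Rightarrow> real" and b :: "nat \<Rightarrow> real"
    and u :: "nat \<Rightarrow> nat" and q :: "nat \<Rightarrow> nat"
    and B :: "nat \<Rightarrow> (real \<times> (nat \<Rightarrow> real)) set"
    and \<pi> :: "nat \<Rightarrow> int" and \<pi>0 :: int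
  assumes "1 \<le> l" and "l \<le> n"
    and "\<forall>k<m. b k \<in> \<rat> \<and> (\<forall>j<n. A k j \<in> \<rat>)"
    and "\<forall>i<l. 0 < u i"
    and "\<forall>i<l. 0 < q i \<and> B i \<in> Gamma (q i) (u i)"
  shows "\<exists>(\<sigma>::nat \<Rightarrow> int) (\<sigma>0::int). (\<forall>j. l \<le> j \<and> j < n \<longrightarrow> \<sigma> j = 0) \<and>
     box_polyhedron n m A b l u - {x \<in> Rn n. real_of_int \<sigma>0 < (\<Sum>j<n. real_of_int (\<sigma> j) * x j)
                                       \<and> (\<Sum>j<n. real_of_int (\<sigma> j) * x j) < real_of_int \<sigma>0 + 1}
     \<subseteq> fst ` (binarized n (box_polyhedron n m A b l u) l B -
         {(x, z). real_of_int \<pi>0 < (\<Sum>j<q 0. real_of_int (\<pi> j) * z 0 j)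
                \<and> (\<Sum>j<q 0. real_of_int (\<pi> j) * z 0 j) < real_of_int \<pi>0 + 1})"
proof -
  define P where "P = box_polyhedron n m A b l u"
  define u0 where "u0 = u 0"
  have l0: "0 < l" using assms(1) by simp
  have B0: "B 0 \<in> Gamma (q 0) u0" using assms(5) l0 unfolding u0_def by auto
  have rp0: "rat_polytope_xz (q 0) (B 0)" using B0 unfolding Gamma_def by auto
  define zk where "zk k = (SOME z. (real k, z) \<in> B 0 \<and> (\<forall>j<q 0. z j = 0 \<or> z j = 1))" for k
  have zk: "(real k, zk k) \<in> B 0 \<and> (\<forall>j<q 0. zk k j = 0 \<or> zk k j = 1)" if kk: "k \<le> u0" for k
  proof -
    obtain w where "(real k, w) \<in> B 0 \<and> (\<forall>j<q 0. w j = 0 \<or> w j = 1)" using gam[OF B0 kk] by blast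
    then show ?thesis unfolding zk_def
      by (rule someI[where P="\<lambda>z. (real k, z) \<in> B 0 \<and> (\<forall>j<q 0. z j = 0 \<or> z j = 1)"])
  qed
  define sk where "sk k = (\<Sum>j<q 0. real_of_int (\<pi> j) * zk k j)" for k
  have skint: "sk k \<in> \<int>" if "k \<le> u0" for k
    unfolding sk_def
  proof (rule Ints_sum)
    fix j assume "j \<in> {..<q 0}"
    then have "zk k j = 0 \<or> zk k j = 1" using zk[OF that] by auto
    then show "real_of_int (\<pi> j) * zk k j \<in> \<int>" by auto
  qed
  define le where "le k = (sk k \<le> real_of_int \<pi>0)" for k
  have notle: "sk k \<ge> real_of_int \<pi>0 + 1" if "k \<le> u0" "\<not> le k" for k
    using intsplit[OF skint[OF that(1)], of \<pi>0] that(2) unfolding le_def by auto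
  define Thr where "Thr j = (j < u0 \<and> le j \<noteq> le (Suc j) \<and> (\<forall>k\<le>j. le k = le j)
     \<and> (\<forall>k. Suc j \<le> k \<and> k \<le> u0 \<longrightarrow> le k = le (Suc j)))" for j
  have uniq: "j = j'" if "Thr j" "Thr j'" for j j'
  proof (rule linorder_cases[of j j'])
    assume "j < j'"
    then show ?thesis using that unfolding Thr_def by (metis Suc_leI le_refl)
  next
    assume "j' < j"
    then show ?thesis using that unfolding Thr_def by (metis Suc_leI le_refl)
  qed
  define \<sigma>0 :: int where "\<sigma>0 = (if \<exists>j. Thr j then int (SOME j. Thr j) else -1)"
  define \<sigma> :: "nat \<Rightarrow> int" where "\<sigma> = (\<lambda>j. if j = 0 then 1 else 0)"
  have sig: "(\<Sum>j<n. real_of_int (\<sigma> j) * x j) = x 0" for x :: "nat \<Rightarrow> real"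
  proof -
    have "(\<Sum>j<n. real_of_int (\<sigma> j) * x j) = (\<Sum>j<n. if j = 0 then x j else 0)"
      by (rule sum.cong) (auto simp: \<sigma>_def)
    also have "\<dots> = x 0" using assms(1,2) by (simp add: sum.delta)
    finally show ?thesis .
  qed
  have anyz: "\<exists>z. (t, z) \<in> B i" if "i < l" "0 \<le> t" "t \<le> real (u i)" for i t
  proof -
    have Bi: "B i \<in> Gamma (q i) (u i)" using assms(5) that(1) by auto
    have rp: "rat_polytope_xz (q i) (B i)" using Bi unfolding Gamma_def by auto
    obtain z1 where z1: "(real 0, z1) \<in> B i" using gam[OF Bi, of 0] by auto
    obtain z2 where z2: "(real (u i), z2) \<in> B i" using gam[OF Bi, of "u i"] by auto
    show ?thesis using interp[OF rp z1 z2] that by auto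
  qed
  have key: "\<exists>z0. (t, z0) \<in> B 0 \<and> \<not> (real_of_int \<pi>0 < (\<Sum>j<q 0. real_of_int (\<pi> j) * z0 j)
                \<and> (\<Sum>j<q 0. real_of_int (\<pi> j) * z0 j) < real_of_int \<pi>0 + 1)"
    if t0: "0 \<le> t" "t \<le> real u0" and tn: "\<not> (real_of_int \<sigma>0 < t \<and> t < real_of_int \<sigma>0 + 1)" for t
  proof (cases "\<exists>k1 k2. k1 \<le> u0 \<and> k2 \<le> u0 \<and> real k1 \<le> t \<and> t \<le> real k2 \<and> le k1 = le k2")
    case True
    then obtain k1 k2 where k: "k1 \<le> u0" "k2 \<le> u0" "real k1 \<le> t" "t \<le> real k2" "le k1 = le k2" by blast
    obtain th where th: "0 \<le> th" "th \<le> 1" "(t, (\<lambda>j. th * zk k1 j + (1-th) * zk k2 j)) \<in> B 0"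
      using interp[OF rp0 conjunct1[OF zk[OF k(1)]] conjunct1[OF zk[OF k(2)]] k(3,4)] by blast
    have S: "(\<Sum>j<q 0. real_of_int (\<pi> j) * (th * zk k1 j + (1-th) * zk k2 j)) = th * sk k1 + (1-th) * sk k2"
      unfolding sk_def by (rule wsum)
    show ?thesis
    proof (cases "le k1")
      case True
      then have "th * sk k1 + (1-th) * sk k2 \<le> real_of_int \<pi>0"
        using k(5) th by (intro convex_bound_le) (auto simp: le_def)
      then show ?thesis using th(3) S by (intro exI[of _ "\<lambda>j. th * zk k1 j + (1-th) * zk k2 j"]) auto
    next
      case False
      then have "real_of_int \<pi>0 + 1 \<le> th * sk k1 + (1-th) * sk k2"
        using k th notle by (intro convex_bound_ge') auto
      then show ?thesis using th(3) S by (intro exI[of _ "\<lambda>j. th * zk k1 j + (1-th) * zk k2 j"]) auto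
    qed
  next
    case False
    define j where "j = nat \<lfloor>t\<rfloor>"
    have jt: "real j \<le> t" "t < real j + 1" using t0 unfolding j_def by linarith+
    have ju: "j \<le> u0" using jt t0 by linarith
    have jne: "real j \<noteq> t" using False ju by auto
    have ju2: "j < u0" using jt jne t0 by linarith
    have "\<not> (j \<le> u0 \<and> Suc j \<le> u0 \<and> real j \<le> t \<and> t \<le> real (Suc j) \<and> le j = le (Suc j))"
      using False by blast
    then have neq: "le j \<noteq> le (Suc j)" using ju2 jt by simp
    have "Thr j"
      unfolding Thr_def
    proof (intro conjI allI impI)
      show "j < u0" by (fact ju2)
      show "le j \<noteq> le (Suc j)" by (fact neq)
      fix k assume "k \<le> j"
      then have "\<not> (k \<le> u0 \<and> Suc j \<le> u0 \<and> real k \<le> t \<and> t \<le> real (Suc j) \<and> le k = le (Suc j))"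
        using False by blast
      then show "le k = le j" using ju2 jt neq \<open>k \<le> j\<close> by auto
    next
      fix k assume "Suc j \<le> k \<and> k \<le> u0"
      then have "\<not> (j \<le> u0 \<and> k \<le> u0 \<and> real j \<le> t \<and> t \<le> real k \<and> le j = le k)"
        using False by blast
      then show "le k = le (Suc j)" using ju2 jt neq \<open>Suc j \<le> k \<and> k \<le> u0\<close> by auto
    qed
    then have "\<sigma>0 = int j" unfolding \<sigma>0_def using uniq by (metis someI_ex)
    then show ?thesis using tn jt jne by auto
  qed
  show ?thesis
    unfolding P_def[symmetric]
  proof (intro exI conjI)
    show "\<forall>j. l \<le> j \<and> j < n \<longrightarrow> \<sigma> j = 0" using assms(1) by (auto simp: \<sigma>_def)
    show "P - {x \<in> Rn n. real_of_int \<sigma>0 < (\<Sum>j<n. real_of_int (\<sigma> j) * x j)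
                                       \<and> (\<Sum>j<n. real_of_int (\<sigma> j) * x j) < real_of_int \<sigma>0 + 1}
     \<subseteq> fst ` (binarized n P l B -
         {(x, z). real_of_int \<pi>0 < (\<Sum>j<q 0. real_of_int (\<pi> j) * z 0 j)
                \<and> (\<Sum>j<q 0. real_of_int (\<pi> j) * z 0 j) < real_of_int \<pi>0 + 1})"
    proof
      fix x assume xm: "x \<in> P - {x \<in> Rn n. real_of_int \<sigma>0 < (\<Sum>j<n. real_of_int (\<sigma> j) * x j)
                                       \<and> (\<Sum>j<n. real_of_int (\<sigma> j) * x j) < real_of_int \<sigma>0 + 1}"
      have xP: "x \<in> P" using xm by auto
      have xR: "x \<in> Rn n" using xP unfolding P_def box_polyhedron_def by auto
      have xb: "\<forall>i<l. 0 \<le> x i \<and> x i \<le> real (u i)" using xP unfolding P_def box_polyhedron_def by auto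
      have xs: "\<not> (real_of_int \<sigma>0 < x 0 \<and> x 0 < real_of_int \<sigma>0 + 1)" using xm xR sig[of x] by auto
      obtain z0 where z0: "(x 0, z0) \<in> B 0" "\<not> (real_of_int \<pi>0 < (\<Sum>j<q 0. real_of_int (\<pi> j) * z0 j)
                \<and> (\<Sum>j<q 0. real_of_int (\<pi> j) * z0 j) < real_of_int \<pi>0 + 1)"
        using key[OF _ _ xs] xb l0 unfolding u0_def by blast
      define z where "z i = (if i = 0 then z0 else if i < l then (SOME w. (x i, w) \<in> B i) else (\<lambda>_. 0))" for i
      have "\<forall>i<l. (x i, z i) \<in> B i"
      proof (intro allI impI)
        fix i assume i: "i < l"
        show "(x i, z i) \<in> B i"
        proof (cases "i = 0")
          case True then show ?thesis using z0 by (simp add: z_def)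
        next
          case False
          obtain w where "(x i, w) \<in> B i" using anyz[OF i] xb i by blast
          then have "(x i, SOME w. (x i, w) \<in> B i) \<in> B i" by (rule someI[where P="\<lambda>w. (x i, w) \<in> B i"])
          then show ?thesis using False i unfolding z_def by simp
        qed
      qed
      moreover have "\<forall>i\<ge>l. z i = (\<lambda>_. 0)" using l0 unfolding z_def by auto
      ultimately have "(x, z) \<in> binarized n P l B" using xP unfolding binarized_def by auto
      moreover have "z 0 = z0" by (simp add: z_def)
      ultimately show "x \<in> fst ` (binarized n P l B -
         {(x, z). real_of_int \<pi>0 < (\<Sum>j<q 0. real_of_int (\<pi> j) * z 0 j)
                \<and> (\<Sum>j<q 0. real_of_int (\<pi> j) * z 0 j) < real_of_int \<pi>0 + 1})"
        using z0(2) by (intro image_eqI[of _ _ "(x, z)"]) auto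
    qed
  qed
qed

end
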